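(* If a complete theory $T$ has a witness of SSOP$_1$, then $T$ has an antichain tree. More precisely, if $\langle\varphi(x,y),\langle a_\eta\rangle_{\eta\in{}^{\omega>}2}\rangle$ witnesses SSOP$_1$, then there is $\langle b_\eta\rangle_{\eta\in{}^{\omega>}2}$ such that $\langle\varphi(x,y),\langle b_\eta\rangle\rangle$ is an antichain tree.
   Context: ${}^{\omega>}2$ is the binary tree with initial-segment order $\trianglelefteq$ and concatenation $^\frown$. $\langle\varphi,\langle a_\eta\rangle\rangle$ witnesses SSOP$_1$ if for every $X\subseteq{}^{\omega>}2$, $\{\varphi(x,a_\eta):\eta\in X\}$ is consistent iff there are no $\eta,\nu\in{}^{\omega>}2$ with $\eta^\frown\langle1\rangle,\eta^\frown\langle0\rangle^\frown\nu\in X$. $\langle\varphi,\langle b_\eta\rangle\rangle$ is an antichain tree if for every $X\subseteq{}^{\omega>}2$, $\{\varphi(x,b_\eta):\eta\in X\}$ is consistent iff the elements of $X$ are pairwise $\trianglelefteq$-incomparable. *)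

theory Defs
  imports Main "HOL-Library.Sublist"
begin

(* Model-theoretic setting: we work inside a (monster) model whose universe of
   x-tuples is the type 'a and of y-tuples is the type 'b; the formula
   phi(x,y) is interpreted as its satisfaction relation phi :: 'a => 'b => bool.
   The tree  ^{omega>}2  is  bool list  (False = 0, True = 1), with
   initial-segment order = prefix and concatenation = @. *)

(* {phi(x,b) : b in B} is consistent (with the elementary diagram of the model),
   i.e. by compactness: every finite subset is realised in the model. *)
definition consistent_inst :: "('a \<Rightarrow> 'b \<Rightarrow> bool) \<Rightarrow> 'b set \<Rightarrow> bool" where
  "consistent_inst phi B \<longleftrightarrow>
     (\<forall>F. finite F \<and> F \<subseteq> B \<longrightarrow> (\<exists>x. \<forall>b\<in>F. phi x b))"

definition ssop1_witness :: "('a \<Rightarrow> 'b \<Rightarrow> bool) \<Rightarrow> (bool list \<Rightarrow> 'b) \<Rightarrow> bool" where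
  "ssop1_witness phi a \<longleftrightarrow>
     (\<forall>X. consistent_inst phi (a ` X) \<longleftrightarrow>
          \<not> (\<exists>\<eta> \<nu>. \<eta> @ [True] \<in> X \<and> \<eta> @ [False] @ \<nu> \<in> X))"

definition antichain_tree :: "('a \<Rightarrow> 'b \<Rightarrow> bool) \<Rightarrow> (bool list \<Rightarrow> 'b) \<Rightarrow> bool" where
  "antichain_tree phi b \<longleftrightarrow>
     (\<forall>X. consistent_inst phi (b ` X) \<longleftrightarrow>
          (\<forall>\<eta>\<in>X. \<forall>\<nu>\<in>X. \<eta> \<noteq> \<nu> \<longrightarrow> \<not> prefix \<eta> \<nu> \<and> \<not> prefix \<nu> \<eta>))"

end

theory Submission
  imports Defs
begin

definition gg :: "bool list \<Rightarrow> bool list" where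
  "gg m = concat (map (\<lambda>x. [False, x]) m)"

lemma gg_key: "prefix (gg m @ [False]) (gg m') \<longleftrightarrow> strict_prefix m m'"
proof (induction m arbitrary: m')
  case Nil
  then show ?case by (cases m') (auto simp: gg_def)
next
  case (Cons x m)
  then show ?case by (cases m') (auto simp: gg_def)
qed

definition ff :: "bool list \<Rightarrow> bool list" where
  "ff m = gg m @ [True]"

lemma ff_pattern:
  "(\<exists>\<eta> \<nu>. \<eta> @ [True] \<in> ff ` X \<and> \<eta> @ [False] @ \<nu> \<in> ff ` X) \<longleftrightarrow>
   \<not> (\<forall>\<eta>\<in>X. \<forall>\<nu>\<in>X. \<eta> \<noteq> \<nu> \<longrightarrow> \<not> prefix \<eta> \<nu> \<and> \<not> prefix \<nu> \<eta>)"
proof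
  assume "\<exists>\<eta> \<nu>. \<eta> @ [True] \<in> ff ` X \<and> \<eta> @ [False] @ \<nu> \<in> ff ` X"
  then obtain \<eta> \<nu> m m' where m: "m \<in> X" "m' \<in> X" "\<eta> @ [True] = gg m @ [True]"
      "\<eta> @ [False] @ \<nu> = gg m' @ [True]" by (auto simp: ff_def)
  then have e: "\<eta> = gg m" by simp
  have "\<nu> \<noteq> []" using m(4) by auto
  then obtain \<nu>0 z where "\<nu> = \<nu>0 @ [z]" by (metis rev_exhaust)
  with m(4) e have "gg m @ [False] @ \<nu>0 = gg m'" by simp
  then have "prefix (gg m @ [False]) (gg m')" by (metis append_assoc prefixI)
  then have "strict_prefix m m'" using gg_key by blast
  then show "\<not> (\<forall>\<eta>\<in>X. \<forall>\<nu>\<in>X. \<eta> \<noteq> \<nu> \<longrightarrow> \<not> prefix \<eta> \<nu> \<and> \<not> prefix \<nu> \<eta>)"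
    using m(1,2) by (auto simp: strict_prefix_def)
next
  assume "\<not> (\<forall>\<eta>\<in>X. \<forall>\<nu>\<in>X. \<eta> \<noteq> \<nu> \<longrightarrow> \<not> prefix \<eta> \<nu> \<and> \<not> prefix \<nu> \<eta>)"
  then obtain m m' where m: "m \<in> X" "m' \<in> X" "strict_prefix m m'"
    by (auto simp: strict_prefix_def)
  then have "prefix (gg m @ [False]) (gg m')" using gg_key by blast
  then obtain r where r: "gg m' = gg m @ [False] @ r" by (auto simp: prefix_def)
  have "gg m @ [True] \<in> ff ` X" using m(1) by (auto simp: ff_def)
  moreover have "gg m @ [False] @ (r @ [True]) \<in> ff ` X"
  proof -
    have "gg m @ [False] @ (r @ [True]) = ff m'" using r by (simp add: ff_def)
    then show ?thesis using m(2) by blast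
  qed
  ultimately show "\<exists>\<eta> \<nu>. \<eta> @ [True] \<in> ff ` X \<and> \<eta> @ [False] @ \<nu> \<in> ff ` X" by blast
qed

theorem proposition5p6:
  fixes phi :: "'a \<Rightarrow> 'b \<Rightarrow> bool" and a :: "bool list \<Rightarrow> 'b"
  assumes "ssop1_witness phi a"
  shows "\<exists>b :: bool list \<Rightarrow> 'b. antichain_tree phi b"
proof
  show "antichain_tree phi (a \<circ> ff)"
    unfolding antichain_tree_def
  proof
    fix X
    have "(a \<circ> ff) ` X = a ` (ff ` X)" by (simp add: image_comp)
    then show "consistent_inst phi ((a \<circ> ff) ` X) \<longleftrightarrow>
          (\<forall>\<eta>\<in>X. \<forall>\<nu>\<in>X. \<eta> \<noteq> \<nu> \<longrightarrow> \<not> prefix \<eta> \<nu> \<and> \<not> prefix \<nu> \<eta>)"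
    proof -
      have "consistent_inst phi (a ` (ff ` X)) \<longleftrightarrow>
          \<not> (\<exists>\<eta> \<nu>. \<eta> @ [True] \<in> ff ` X \<and> \<eta> @ [False] @ \<nu> \<in> ff ` X)"
        using assms unfolding ssop1_witness_def by blast
      then show ?thesis using ff_pattern[of X] \<open>(a \<circ> ff) ` X = a ` (ff ` X)\<close> by (metis (no_types, lifting))
    qed
  qed
qed

end
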